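(* Let $r\ge 1$ be an integer, let $k_1,\dots,k_r$ be integers, and let $a,b>0$ with $ab\neq \pm 1$. Then for every integer $n\ge 0$, $$\mathbf{E}_{n}^{(k_1,\dots,k_r)}(a,b)=\mathbf{E}_{n}^{(k_1,\dots,k_r)}\!\left(\frac{\ln a}{\ln a+\ln b}\right)(\ln a+\ln b)^n .$$
   Context: For integers $k_1,\dots,k_r$, the multi-polylogarithm is $Li_{(k_1,\dots,k_r)}(z)=\sum_{0<m_1<m_2<\dots<m_r}\frac{z^{m_r}}{m_1^{k_1}m_2^{k_2}\cdots m_r^{k_r}}$ (sum over integers). For $c>0$, $c^t:=e^{t\ln c}$. The Multi Poly-Euler polynomials $\mathbf{E}_n^{(k_1,\dots,k_r)}(x)$ are defined by the generating series $$\frac{2Li_{(k_1,\dots,k_r)}(1-e^{-t})}{(1+e^t)^r}e^{rxt}=\sum_{n=0}^{\infty}\mathbf{E}_{n}^{(k_1,\dots,k_r)}(x)\frac{t^n}{n!}.$$ The generalized Multi Poly-Euler polynomials with parameters $a,b$ are defined by $$\frac{2Li_{(k_1,\dots,k_r)}(1-(ab)^{-t})}{(a^{-t}+b^t)^r}e^{rxt}=\sum_{n=0}^{\infty}\mathbf{E}_{n}^{(k_1,\dots,k_r)}(x;a,b)\frac{t^n}{n!},$$ and $\mathbf{E}_{n}^{(k_1,\dots,k_r)}(a,b):=\mathbf{E}_{n}^{(k_1,\dots,k_r)}(0;a,b)$. *)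

theory Defs
  imports "HOL-Analysis.Analysis" "HOL-Computational_Algebra.Formal_Power_Series"
begin

text \<open>Coefficient of z^m in the multi-polylogarithm Li_(k_1,...,k_r)(z):
  sum over 0 < m_1 < ... < m_r = m of 1/(m_1^k_1 ... m_r^k_r).
  The index list ks = [k_1,...,k_r]; tuples (m_1,...,m_r) are lists.\<close>
definition mpl_coeff :: "int list \<Rightarrow> nat \<Rightarrow> real" where
  "mpl_coeff ks m =
     (\<Sum>ms \<in> {ms. length ms = length ks \<and> sorted_wrt (<) ms \<and> (\<forall>x\<in>set ms. 0 < x)
                  \<and> last ms = m}.
        1 / (\<Prod>i<length ks. real (ms ! i) powi (ks ! i)))"

definition mpl_fps :: "int list \<Rightarrow> real fps" where
  "mpl_fps ks = Abs_fps (mpl_coeff ks)"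

definition multi_poly_euler :: "int list \<Rightarrow> real \<Rightarrow> nat \<Rightarrow> real" where
  "multi_poly_euler ks x n =
     fact n * fps_nth
       (2 * (mpl_fps ks oo (1 - fps_exp (-1)))
          * inverse ((1 + fps_exp 1) ^ length ks)
          * fps_exp (real (length ks) * x)) n"

text \<open>Generalized Multi Poly-Euler polynomial E_n^(ks)(x;a,b): generating series
  2 Li_ks(1 - (ab)^{-t}) / (a^{-t} + b^t)^r * e^{r x t}, with c^t = e^{t ln c}.\<close>
definition multi_poly_euler_gen :: "int list \<Rightarrow> real \<Rightarrow> real \<Rightarrow> real \<Rightarrow> nat \<Rightarrow> real" where
  "multi_poly_euler_gen ks x a b n =
     fact n * fps_nth
       (2 * (mpl_fps ks oo (1 - fps_exp (- ln (a * b))))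
          * inverse ((fps_exp (- ln a) + fps_exp (ln b)) ^ length ks)
          * fps_exp (real (length ks) * x)) n"

end

theory Submission
  imports Defs
begin

theorem theorem1:
  fixes ks :: "int list" and a b :: real and n :: nat
  assumes "length ks \<ge> 1" and "a > 0" and "b > 0"
    and "a * b \<noteq> 1" and "a * b \<noteq> -1"
  shows "multi_poly_euler_gen ks 0 a b n
         = multi_poly_euler ks (ln a / (ln a + ln b)) n * (ln a + ln b) ^ n"
proof -
  define c where "c = ln a + ln b"
  have cab: "c = ln (a*b)" using assms by (simp add: c_def ln_mult)
  have c0: "c \<noteq> 0" using assms by (simp add: cab)
  define r where "r = length ks"
  define x where "x = ln a / c"
  have xc: "x * c = ln a" using c0 by (simp add: x_def)
  define L :: "real fps" where "L = fps_const c * fps_X"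
  have L0: "fps_nth L 0 = 0" by (simp add: L_def)
  define M where "M = mpl_fps ks"
  define A :: "real fps" where "A = 1 - fps_exp (-1)"
  have A0: "fps_nth A 0 = 0" by (simp add: A_def)
  define P :: "real fps" where "P = (1 + fps_exp 1) ^ r"
  have P0: "fps_nth P 0 \<noteq> 0" by (simp add: P_def fps_nth_power_0)
  define F where "F = 2 * (M oo A) * inverse P * fps_exp (real r * x)"
  have AL: "A oo L = 1 - fps_exp (- ln (a*b))"
    by (simp add: A_def L_def fps_compose_sub_distrib cab)
  have PL: "P oo L = (1 + fps_exp c) ^ r"
    by (simp add: P_def L_def fps_compose_power[symmetric] fps_compose_add_distrib)
  have FL: "F oo L = 2 * (M oo (1 - fps_exp (- ln (a*b)))) * inverse ((1 + fps_exp c) ^ r)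
              * fps_exp (real r * ln a)"
  proof -
    have "F oo L = (2 oo L) * ((M oo A) oo L) * (inverse P oo L) * (fps_exp (real r * x) oo L)"
      by (simp add: F_def fps_compose_mult_distrib[OF L0])
    also have "((M oo A) oo L) = M oo (A oo L)" using fps_compose_assoc[OF L0 A0] by simp
    also have "inverse P oo L = inverse (P oo L)" using fps_inverse_compose[OF L0 P0] .
    also have "fps_exp (real r * x) oo L = fps_exp (real r * ln a)"
      unfolding L_def fps_exp_compose_linear using xc by (simp add: algebra_simps)
    finally show ?thesis by (simp add: AL PL)
  qed
  have den: "inverse ((1 + fps_exp c) ^ r) * fps_exp (real r * ln a)
      = inverse ((fps_exp (- ln a) + fps_exp (ln b)) ^ r)"
  proof -
    have "fps_exp (- ln a) + fps_exp (ln b) = fps_exp (- ln a) * (1 + fps_exp c)"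
      by (simp add: c_def distrib_left fps_exp_add_mult[symmetric])
    hence "inverse ((fps_exp (- ln a) + fps_exp (ln b)) ^ r)
        = inverse (fps_exp (- ln a)) ^ r * inverse ((1 + fps_exp c) ^ r)"
      by (simp add: power_mult_distrib fps_inverse_mult fps_inverse_power)
    also have "inverse (fps_exp (- ln a)) ^ r = fps_exp (real r * ln a)"
      by (simp add: fps_exp_neg fps_exp_power_mult)
    finally show ?thesis by simp
  qed
  have G: "multi_poly_euler_gen ks 0 a b n = fact n * fps_nth (F oo L) n"
    using den by (simp add: multi_poly_euler_gen_def FL M_def r_def mult.assoc)
  have E: "multi_poly_euler ks x n = fact n * fps_nth F n"
    by (simp add: multi_poly_euler_def F_def M_def A_def P_def r_def)
  show ?thesis
    by (simp add: G E x_def[symmetric] c_def[symmetric] L_def)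
qed

end
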